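(* Let $g\in H(\mathbb{D})$ and let $\nu,\mu$ be weights. Then the following are equivalent: (1) $S_g: \mathcal{B}^{\infty}_\nu\rightarrow \mathcal{B}^{\infty}_\mu$ is bounded; (2) $\sup_{z\in\mathbb{D}}|g(z)|\,\mu(z)/\widetilde{\nu}(z)<\infty$. If, in addition, $\nu$ and $\mu$ are typical weights, then (1) and (2) are also equivalent to (3) $S_g: \mathcal{B}^{0}_\nu\rightarrow \mathcal{B}^{0}_\mu$ is bounded.
   Context: $\mathbb{D}$ is the open unit disk and $H(\mathbb{D})$ the space of analytic functions on $\mathbb{D}$. A weight is a non-negative continuous function $\nu$ on $\mathbb{D}$ with $\nu(z)=\nu(|z|)$ for all $z$, which is decreasing in $|z|$. For a weight $\nu$: $H^{\infty}_\nu=\{f\in H(\mathbb{D}): \|f\|_{H^\infty_\nu}=\sup_{z}\nu(z)|f(z)|<\infty\}$; $\mathcal{B}^{\infty}_\nu=\{f\in H(\mathbb{D}): \|f\|=|f(0)|+\sup_{z}\nu(z)|f'(z)|<\infty\}$; $\mathcal{B}^{0}_\nu=\{f\in H(\mathbb{D}): \lim_{|z|\to1^-}\nu(z)|f'(z)|=0\}$ (with the norm of $\mathcal{B}^\infty_\nu$). The associated weight of $\nu$ is $\widetilde{\nu}(z)=1/\sup\{|f(z)|: f\in H^\infty_\nu,\ \|f\|_{H^\infty_\nu}\le 1\}$. A weight $\nu$ is typical if $\lim_{|z|\to1^-}\nu(z)=0$. For $g\in H(\mathbb{D})$, $(S_gf)(z)=\int_0^z f'(\omega)g(\omega)\,d\omega$.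 *)

theory Defs
  imports "HOL-Complex_Analysis.Complex_Analysis"
begin

abbreviation unit_disc :: "complex set" where
  "unit_disc \<equiv> ball 0 1"

definition weight :: "(complex \<Rightarrow> real) \<Rightarrow> bool" where
  "weight \<nu> \<longleftrightarrow>
     continuous_on unit_disc \<nu> \<and>
     (\<forall>z\<in>unit_disc. 0 \<le> \<nu> z) \<and>
     (\<forall>z\<in>unit_disc. \<nu> z = \<nu> (complex_of_real (cmod z))) \<and>
     (\<forall>z\<in>unit_disc. \<forall>w\<in>unit_disc. cmod z \<le> cmod w \<longrightarrow> \<nu> w \<le> \<nu> z)"

definition typical_weight :: "(complex \<Rightarrow> real) \<Rightarrow> bool" where
  "typical_weight \<nu> \<longleftrightarrow> weight \<nu> \<and>
     (\<forall>e>0. \<exists>r<1. \<forall>z\<in>unit_disc. r < cmod z \<longrightarrow> \<bar>\<nu> z\<bar> < e)"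

definition Hinf :: "(complex \<Rightarrow> real) \<Rightarrow> (complex \<Rightarrow> complex) set" where
  "Hinf \<nu> = {f. f holomorphic_on unit_disc \<and> bdd_above ((\<lambda>z. \<nu> z * cmod (f z)) ` unit_disc)}"

definition Hinf_norm :: "(complex \<Rightarrow> real) \<Rightarrow> (complex \<Rightarrow> complex) \<Rightarrow> real" where
  "Hinf_norm \<nu> f = (SUP z\<in>unit_disc. \<nu> z * cmod (f z))"

text \<open>Associated weight, valued in the extended reals (1/infinity = 0).\<close>
definition assoc_weight :: "(complex \<Rightarrow> real) \<Rightarrow> complex \<Rightarrow> ereal" where
  "assoc_weight \<nu> z =
     1 / (SUP f\<in>{f\<in>Hinf \<nu>. Hinf_norm \<nu> f \<le> 1}. ereal (cmod (f z)))"

definition Bloch_inf :: "(complex \<Rightarrow> real) \<Rightarrow> (complex \<Rightarrow> complex) set" where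
  "Bloch_inf \<nu> = {f. f holomorphic_on unit_disc \<and>
       bdd_above ((\<lambda>z. \<nu> z * cmod (deriv f z)) ` unit_disc)}"

definition Bloch_0 :: "(complex \<Rightarrow> real) \<Rightarrow> (complex \<Rightarrow> complex) set" where
  "Bloch_0 \<nu> = {f. f holomorphic_on unit_disc \<and>
       (\<forall>e>0. \<exists>r<1. \<forall>z\<in>unit_disc. r < cmod z \<longrightarrow> \<nu> z * cmod (deriv f z) < e)}"

definition Bloch_norm :: "(complex \<Rightarrow> real) \<Rightarrow> (complex \<Rightarrow> complex) \<Rightarrow> real" where
  "Bloch_norm \<nu> f = cmod (f 0) + (SUP z\<in>unit_disc. \<nu> z * cmod (deriv f z))"

definition S_op :: "(complex \<Rightarrow> complex) \<Rightarrow> (complex \<Rightarrow> complex) \<Rightarrow> complex \<Rightarrow> complex" where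
  "S_op g f z = contour_integral (linepath 0 z) (\<lambda>w. deriv f w * g w)"

definition bounded_op ::
  "('a \<Rightarrow> 'b) \<Rightarrow> 'a set \<Rightarrow> ('a \<Rightarrow> real) \<Rightarrow> 'b set \<Rightarrow> ('b \<Rightarrow> real) \<Rightarrow> bool" where
  "bounded_op T X nX Y nY \<longleftrightarrow> (\<forall>f\<in>X. T f \<in> Y) \<and> (\<exists>C. \<forall>f\<in>X. nY (T f) \<le> C * nX f)"

end

theory Submission
  imports Defs
begin

lemma prim_deriv:
  assumes hol: "k holomorphic_on unit_disc" and z: "z \<in> unit_disc"
  shows "((\<lambda>z. contour_integral (linepath 0 z) k) has_field_derivative k z) (at z)"
proof -
  have "((\<lambda>z. contour_integral (linepath 0 z) k) has_field_derivative k z) (at z within unit_disc)"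
  proof (rule triangle_contour_integrals_convex_primitive)
    show "continuous_on unit_disc k" using hol by (simp add: holomorphic_on_imp_continuous_on)
    fix b c assume "b \<in> unit_disc" "c \<in> unit_disc"
    then have "convex hull {0,b,c} \<subseteq> unit_disc"
      by (intro hull_minimal) (auto simp: convex_ball)
    then have "(k has_contour_integral 0) (linepath 0 b +++ linepath b c +++ linepath c 0)"
      by (intro Cauchy_theorem_triangle holomorphic_on_subset[OF hol])
    then show "contour_integral (linepath 0 b) k + contour_integral (linepath b c) k +
                       contour_integral (linepath c 0) k = 0"
      by (rule has_chain_integral_chain_integral3)
  qed (use z in auto)
  then show ?thesis using z by (simp add: at_within_open[of z unit_disc])
qed


lemma prim_hol:
  assumes hol: "k holomorphic_on unit_disc"
  shows "(\<lambda>z. contour_integral (linepath 0 z) k) holomorphic_on unit_disc"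
  using prim_deriv[OF hol] holomorphic_on_open[of unit_disc] by blast

lemma prim_dderiv:
  assumes hol: "k holomorphic_on unit_disc" and z: "z \<in> unit_disc"
  shows "deriv (\<lambda>z. contour_integral (linepath 0 z) k) z = k z"
  using prim_deriv[OF assms] DERIV_imp_deriv by blast

lemma S_op_props:
  assumes g: "g holomorphic_on unit_disc" and f: "f holomorphic_on unit_disc"
  shows "S_op g f holomorphic_on unit_disc" "S_op g f 0 = 0"
    "\<And>z. z \<in> unit_disc \<Longrightarrow> deriv (S_op g f) z = deriv f z * g z"
proof -
  have k: "(\<lambda>w. deriv f w * g w) holomorphic_on unit_disc"
    using f g by (intro holomorphic_intros holomorphic_deriv) auto
  have e: "S_op g f = (\<lambda>z. contour_integral (linepath 0 z) (\<lambda>w. deriv f w * g w))"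
    by (simp add: S_op_def fun_eq_iff)
  show "S_op g f holomorphic_on unit_disc" unfolding e by (rule prim_hol[OF k])
  show "S_op g f 0 = 0" by (simp add: S_op_def)
  show "\<And>z. z \<in> unit_disc \<Longrightarrow> deriv (S_op g f) z = deriv f z * g z"
    unfolding e by (rule prim_dderiv[OF k])
qed

lemma weight_nonneg: "weight \<nu> \<Longrightarrow> z \<in> unit_disc \<Longrightarrow> 0 \<le> \<nu> z"
  unfolding weight_def by blast

lemma weight_mono: "weight \<nu> \<Longrightarrow> z \<in> unit_disc \<Longrightarrow> w \<in> unit_disc \<Longrightarrow> cmod z \<le> cmod w \<Longrightarrow> \<nu> w \<le> \<nu> z"
  unfolding weight_def by blast

lemma weight_le0: "weight \<nu> \<Longrightarrow> z \<in> unit_disc \<Longrightarrow> \<nu> z \<le> \<nu> 0"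
  by (rule weight_mono) auto

lemma weight_eq: "weight \<nu> \<Longrightarrow> z \<in> unit_disc \<Longrightarrow> u \<in> unit_disc \<Longrightarrow> cmod u = cmod z \<Longrightarrow> \<nu> u = \<nu> z"
  using weight_mono[of \<nu> z u] weight_mono[of \<nu> u z] by simp

lemma max_mod:
  assumes hol: "h holomorphic_on unit_disc" and w: "w \<in> unit_disc" and t: "0 \<le> t" "t \<le> 1"
    and B: "\<And>u. cmod u = cmod w \<Longrightarrow> cmod (h u) \<le> Bd"
  shows "cmod (h (of_real t * w)) \<le> Bd"
proof (cases "w = 0")
  case True then show ?thesis using B[of 0] by simp
next
  case False
  let ?r = "cmod w"
  have sub: "cball 0 ?r \<subseteq> unit_disc" using w by auto
  show ?thesis
  proof (rule maximum_modulus_frontier[of h "cball 0 ?r"])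
    show "h holomorphic_on interior (cball 0 ?r)"
      using holomorphic_on_subset[OF hol, of "ball 0 ?r"] sub ball_subset_cball[of 0 ?r] interior_cball by (metis order_trans)
    show "continuous_on (closure (cball 0 ?r)) h"
      using holomorphic_on_imp_continuous_on[OF holomorphic_on_subset[OF hol sub]] by simp
    show "bounded (cball 0 ?r)" by simp
    show "cmod (h z) \<le> Bd" if "z \<in> frontier (cball 0 ?r)" for z
      using that B by simp
    show "of_real t * w \<in> cball 0 ?r"
      using t by (simp add: norm_mult mult_left_le_one_le)
  qed
qed

lemma cont_bound:
  assumes hol: "h holomorphic_on unit_disc" and t: "t < 1"
  obtains K where "K \<ge> 0" "\<And>u. cmod u \<le> t \<Longrightarrow> cmod (h u) \<le> K"
proof -
  have sub: "cball 0 t \<subseteq> unit_disc" using t by auto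
  have "compact (h ` cball 0 t)"
    by (rule compact_continuous_image[OF holomorphic_on_imp_continuous_on[OF holomorphic_on_subset[OF hol sub]]]) simp
  then obtain K where K: "K > 0" "\<And>x. x \<in> h ` cball 0 t \<Longrightarrow> cmod x \<le> K"
    using compact_imp_bounded bounded_pos by metis
  show ?thesis
    by (rule that[of K]) (use K in auto)
qed

definition KI :: "(complex \<Rightarrow> complex) \<Rightarrow> (complex \<Rightarrow> real) \<Rightarrow> (complex \<Rightarrow> real) \<Rightarrow> real \<Rightarrow> bool" where
  "KI g \<nu> \<mu> M \<longleftrightarrow> (\<forall>h. h holomorphic_on unit_disc \<longrightarrow> (\<forall>w\<in>unit_disc. \<nu> w * cmod (h w) \<le> 1) \<longrightarrow>
      (\<forall>z\<in>unit_disc. \<mu> z * cmod (g z) * cmod (h z) \<le> M))"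

lemma KI_nonneg: assumes "KI g \<nu> \<mu> M" shows "0 \<le> M"
  using assms[unfolded KI_def, rule_format, of "\<lambda>_. 0" 0] by simp

lemma KI_B:
  assumes "weight \<nu>" "weight \<mu>" "KI g \<nu> \<mu> M" "h holomorphic_on unit_disc"
    and B: "\<And>w. w \<in> unit_disc \<Longrightarrow> \<nu> w * cmod (h w) \<le> B" and z: "z \<in> unit_disc"
  shows "\<mu> z * cmod (g z) * cmod (h z) \<le> M * B"
proof -
  have B0: "0 \<le> B" using B[of 0] weight_nonneg[OF assms(1), of 0] by (smt (verit) mem_ball_0 norm_ge_zero norm_zero zero_less_one mult_nonneg_nonneg)
  have x0: "0 \<le> \<mu> z * cmod (g z) * cmod (h z)" using weight_nonneg[OF assms(2) z] by simp
  have scaled: "\<mu> z * cmod (g z) * cmod (h z) * c \<le> M" if c: "c > 0" "\<And>w. w \<in> unit_disc \<Longrightarrow> \<nu> w * cmod (h w) * c \<le> 1" for c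
  proof -
    have "(\<lambda>w. of_real c * h w) holomorphic_on unit_disc" using assms(4) by (intro holomorphic_intros)
    moreover have "\<forall>w\<in>unit_disc. \<nu> w * cmod (of_real c * h w) \<le> 1"
      using c by (simp add: norm_mult mult_ac)
    ultimately have "\<mu> z * cmod (g z) * cmod (of_real c * h z) \<le> M"
      using assms(3) z unfolding KI_def by blast
    then show ?thesis using c by (simp add: norm_mult mult_ac)
  qed
  show ?thesis
  proof (cases "B = 0")
    case False
    then have Bp: "B > 0" using B0 by simp
    have "\<mu> z * cmod (g z) * cmod (h z) * (1/B) \<le> M"
      by (rule scaled) (use Bp B in \<open>auto simp: field_simps\<close>)
    then show ?thesis using Bp by (simp add: field_simps)
  next
    case True
    show ?thesis
    proof (rule ccontr)
      assume "\<not> ?thesis"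
      then have xp: "\<mu> z * cmod (g z) * cmod (h z) > 0" using True by simp
      have M0: "0 \<le> M" using KI_nonneg[OF assms(3)] .
      have "\<mu> z * cmod (g z) * cmod (h z) * ((M+1) / (\<mu> z * cmod (g z) * cmod (h z))) \<le> M"
      proof (rule scaled)
        have "\<And>w. w \<in> unit_disc \<Longrightarrow> \<nu> w * cmod (h w) = 0"
          using B True weight_nonneg[OF assms(1)] by (smt (verit) mult_nonneg_nonneg norm_ge_zero)
        then show "\<And>w. w \<in> unit_disc \<Longrightarrow> \<nu> w * cmod (h w) * ((M + 1) / (\<mu> z * cmod (g z) * cmod (h z))) \<le> 1"
          by (metis mult_zero_left zero_le_one)
      qed (use xp M0 in auto)
      moreover have "\<mu> z * cmod (g z) * cmod (h z) * ((M+1) / (\<mu> z * cmod (g z) * cmod (h z))) = M + 1"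
        using xp by (simp only: times_divide_eq_right) (simp only: nonzero_mult_div_cancel_left[OF order.strict_implies_not_eq[OF xp, symmetric]] div_by_1)
      ultimately show False by simp
    qed
  qed
qed


lemma Ball_iff:
  "f \<in> {f\<in>Hinf \<nu>. Hinf_norm \<nu> f \<le> 1} \<longleftrightarrow> f holomorphic_on unit_disc \<and> (\<forall>w\<in>unit_disc. \<nu> w * cmod (f w) \<le> 1)"
proof
  assume a: "f \<in> {f\<in>Hinf \<nu>. Hinf_norm \<nu> f \<le> 1}"
  then have hol: "f holomorphic_on unit_disc" and bdd: "bdd_above ((\<lambda>z. \<nu> z * cmod (f z)) ` unit_disc)"
    and n: "(SUP z\<in>unit_disc. \<nu> z * cmod (f z)) \<le> 1"
    by (auto simp: Hinf_def Hinf_norm_def)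
  have "\<nu> w * cmod (f w) \<le> 1" if "w \<in> unit_disc" for w
    using cSUP_upper[OF that bdd] n by linarith
  then show "f holomorphic_on unit_disc \<and> (\<forall>w\<in>unit_disc. \<nu> w * cmod (f w) \<le> 1)" using hol by blast
next
  assume a: "f holomorphic_on unit_disc \<and> (\<forall>w\<in>unit_disc. \<nu> w * cmod (f w) \<le> 1)"
  then have "bdd_above ((\<lambda>z. \<nu> z * cmod (f z)) ` unit_disc)"
    by (intro bdd_aboveI2[of _ _ 1]) auto
  moreover have "(SUP z\<in>unit_disc. \<nu> z * cmod (f z)) \<le> 1"
    using a by (intro cSUP_least) auto
  ultimately show "f \<in> {f\<in>Hinf \<nu>. Hinf_norm \<nu> f \<le> 1}"
    using a by (simp add: Hinf_def Hinf_norm_def)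
qed

lemma ereal_fin_bound: "(X::ereal) < \<infinity> \<Longrightarrow> \<exists>M. X \<le> ereal M"
  by (cases X) auto

lemma lemA:
  assumes "weight \<nu>" "weight \<mu>"
  shows "(SUP z\<in>unit_disc. ereal (cmod (g z) * \<mu> z) / assoc_weight \<nu> z) < \<infinity> \<longleftrightarrow> (\<exists>M. KI g \<nu> \<mu> M)"
proof -
  let ?Bl = "{f\<in>Hinf \<nu>. Hinf_norm \<nu> f \<le> 1}"
  have z0: "(\<lambda>_. 0) \<in> ?Bl" unfolding Ball_iff using weight_nonneg[OF assms(1)] by auto
  then have ne: "?Bl \<noteq> {}" by blast
  have q: "ereal (cmod (g z) * \<mu> z) / assoc_weight \<nu> z = (SUP f\<in>?Bl. ereal (\<mu> z * cmod (g z) * cmod (f z)))"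
    if z: "z \<in> unit_disc" for z
  proof -
    let ?s = "SUP f\<in>?Bl. ereal (cmod (f z))"
    have s0: "0 \<le> ?s" using SUP_upper[OF z0, of "\<lambda>f. ereal (cmod (f z))"] by (simp add: zero_ereal_def)
    have a0: "0 \<le> cmod (g z) * \<mu> z" using weight_nonneg[OF assms(2) z] by simp
    have "assoc_weight \<nu> z = inverse ?s" unfolding assoc_weight_def by (simp add: divide_ereal_def)
    then have "ereal (cmod (g z) * \<mu> z) / assoc_weight \<nu> z = ereal (cmod (g z) * \<mu> z) * ?s"
      using s0 by (simp add: divide_ereal_def)
    also have "\<dots> = (SUP f\<in>?Bl. ereal (cmod (g z) * \<mu> z) * ereal (cmod (f z)))"
      by (rule Sup_ereal_mult_left'[OF ne a0])
    finally show ?thesis by (simp add: mult_ac)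
  qed
  show ?thesis
  proof
    assume "(SUP z\<in>unit_disc. ereal (cmod (g z) * \<mu> z) / assoc_weight \<nu> z) < \<infinity>"
    then obtain M where M: "(SUP z\<in>unit_disc. ereal (cmod (g z) * \<mu> z) / assoc_weight \<nu> z) \<le> ereal M"
      using ereal_fin_bound by blast
    have "KI g \<nu> \<mu> M" unfolding KI_def
    proof (intro allI impI ballI)
      fix h z assume h: "h holomorphic_on unit_disc" "\<forall>w\<in>unit_disc. \<nu> w * cmod (h w) \<le> 1" and z: "z \<in> unit_disc"
      have hB: "h \<in> ?Bl" unfolding Ball_iff using h by blast
      have "ereal (\<mu> z * cmod (g z) * cmod (h z)) \<le> (SUP f\<in>?Bl. ereal (\<mu> z * cmod (g z) * cmod (f z)))"
        by (rule SUP_upper[OF hB])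
      also have "\<dots> = ereal (cmod (g z) * \<mu> z) / assoc_weight \<nu> z" using q[OF z] by simp
      also have "\<dots> \<le> (SUP z\<in>unit_disc. ereal (cmod (g z) * \<mu> z) / assoc_weight \<nu> z)"
        by (rule SUP_upper[OF z])
      also have "\<dots> \<le> ereal M" by (rule M)
      finally show "\<mu> z * cmod (g z) * cmod (h z) \<le> M" by simp
    qed
    then show "\<exists>M. KI g \<nu> \<mu> M" by blast
  next
    assume "\<exists>M. KI g \<nu> \<mu> M"
    then obtain M where M: "KI g \<nu> \<mu> M" by blast
    have "(SUP z\<in>unit_disc. ereal (cmod (g z) * \<mu> z) / assoc_weight \<nu> z) \<le> ereal M"
    proof (rule SUP_least)
      fix z assume z: "z \<in> unit_disc"
      have "(SUP f\<in>?Bl. ereal (\<mu> z * cmod (g z) * cmod (f z))) \<le> ereal M"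
      proof (rule SUP_least)
        fix f assume "f \<in> ?Bl"
        then have "f holomorphic_on unit_disc" "\<forall>w\<in>unit_disc. \<nu> w * cmod (f w) \<le> 1"
          unfolding Ball_iff by auto
        then show "ereal (\<mu> z * cmod (g z) * cmod (f z)) \<le> ereal M"
          using M z unfolding KI_def by simp
      qed
      then show "ereal (cmod (g z) * \<mu> z) / assoc_weight \<nu> z \<le> ereal M" using q[OF z] by simp
    qed
    then show "(SUP z\<in>unit_disc. ereal (cmod (g z) * \<mu> z) / assoc_weight \<nu> z) < \<infinity>"
      by (rule order.strict_trans1) simp
  qed
qed


lemma KI_imp_bound:
  assumes "weight \<nu>" "weight \<mu>" "g holomorphic_on unit_disc" "KI g \<nu> \<mu> M" "f \<in> Bloch_inf \<nu>"
  shows "S_op g f \<in> Bloch_inf \<mu> \<and> Bloch_norm \<mu> (S_op g f) \<le> M * Bloch_norm \<nu> f"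
proof -
  have fh: "f holomorphic_on unit_disc" and bdd: "bdd_above ((\<lambda>z. \<nu> z * cmod (deriv f z)) ` unit_disc)"
    using assms(5) by (auto simp: Bloch_inf_def)
  have hh: "deriv f holomorphic_on unit_disc" by (rule holomorphic_deriv[OF fh]) simp
  define B where "B = (SUP z\<in>unit_disc. \<nu> z * cmod (deriv f z))"
  have Bw: "\<nu> w * cmod (deriv f w) \<le> B" if "w \<in> unit_disc" for w
    unfolding B_def by (rule cSUP_upper[OF that bdd])
  have M0: "0 \<le> M" by (rule KI_nonneg[OF assms(4)])
  have le: "\<mu> z * cmod (deriv (S_op g f) z) \<le> M * B" if z: "z \<in> unit_disc" for z
  proof -
    have "\<mu> z * cmod (g z) * cmod (deriv f z) \<le> M * B"
      by (rule KI_B[OF assms(1,2,4) hh Bw z])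
    then show ?thesis using S_op_props(3)[OF assms(3) fh z] by (simp add: norm_mult mult_ac)
  qed
  have mem: "S_op g f \<in> Bloch_inf \<mu>"
    unfolding Bloch_inf_def using S_op_props(1)[OF assms(3) fh] le
    by (auto intro!: bdd_aboveI2[of _ _ "M * B"])
  have "Bloch_norm \<mu> (S_op g f) = (SUP z\<in>unit_disc. \<mu> z * cmod (deriv (S_op g f) z))"
    unfolding Bloch_norm_def using S_op_props(2)[OF assms(3) fh] by simp
  also have "\<dots> \<le> M * B" using le by (intro cSUP_least) auto
  also have "\<dots> \<le> M * Bloch_norm \<nu> f"
    unfolding Bloch_norm_def B_def[symmetric] using M0 by (simp add: mult_left_mono)
  finally show ?thesis using mem by blast
qed

lemma Bloch_norm_nonneg:
  assumes "weight \<nu>" "f \<in> Bloch_inf \<nu>"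
  shows "0 \<le> Bloch_norm \<nu> f"
proof -
  have bdd: "bdd_above ((\<lambda>z. \<nu> z * cmod (deriv f z)) ` unit_disc)"
    using assms(2) by (auto simp: Bloch_inf_def)
  have "0 \<le> \<nu> 0 * cmod (deriv f 0)" using weight_nonneg[OF assms(1), of 0] by simp
  also have "\<dots> \<le> (SUP z\<in>unit_disc. \<nu> z * cmod (deriv f z))" by (rule cSUP_upper[OF _ bdd]) simp
  finally show ?thesis unfolding Bloch_norm_def by simp
qed

lemma prim_Bloch:
  assumes "weight \<nu>" "h holomorphic_on unit_disc" "\<forall>w\<in>unit_disc. \<nu> w * cmod (h w) \<le> 1"
  defines "f \<equiv> (\<lambda>z. contour_integral (linepath 0 z) h)"
  shows "f \<in> Bloch_inf \<nu>" "Bloch_norm \<nu> f \<le> 1" "f holomorphic_on unit_disc"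
    "\<And>z. z \<in> unit_disc \<Longrightarrow> deriv f z = h z"
proof -
  show fh: "f holomorphic_on unit_disc" unfolding f_def by (rule prim_hol[OF assms(2)])
  show d: "\<And>z. z \<in> unit_disc \<Longrightarrow> deriv f z = h z" unfolding f_def by (rule prim_dderiv[OF assms(2)])
  have le: "\<nu> z * cmod (deriv f z) \<le> 1" if "z \<in> unit_disc" for z using d[OF that] assms(3) that by simp
  show "f \<in> Bloch_inf \<nu>" unfolding Bloch_inf_def using fh le by (auto intro!: bdd_aboveI2[of _ _ 1])
  have "(SUP z\<in>unit_disc. \<nu> z * cmod (deriv f z)) \<le> 1" using le by (intro cSUP_least) auto
  then show "Bloch_norm \<nu> f \<le> 1" unfolding Bloch_norm_def f_def by simp
qed

lemma bound_imp_KI: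
  assumes "weight \<nu>" "weight \<mu>" "g holomorphic_on unit_disc"
    and h: "h holomorphic_on unit_disc" "\<And>w. w \<in> unit_disc \<Longrightarrow> \<nu> w * cmod (h w) \<le> 1"
    and z: "z \<in> unit_disc"
    and T: "\<And>f. f \<in> Bloch_inf \<nu> \<Longrightarrow> (\<forall>w\<in>unit_disc. \<nu> w * cmod (deriv f w) \<le> 1) \<Longrightarrow>
        S_op g f \<in> Bloch_inf \<mu> \<and> Bloch_norm \<mu> (S_op g f) \<le> C * Bloch_norm \<nu> f"
  shows "\<mu> z * cmod (g z) * cmod (h z) \<le> \<bar>C\<bar>"
proof -
  define f where "f = (\<lambda>z. contour_integral (linepath 0 z) h)"
  have h2: "\<forall>w\<in>unit_disc. \<nu> w * cmod (h w) \<le> 1" using h(2) by blast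
  note P = prim_Bloch[OF assms(1) h(1) h2, folded f_def]
  have "\<forall>w\<in>unit_disc. \<nu> w * cmod (deriv f w) \<le> 1" using P(4) h(2) by simp
  then have S: "S_op g f \<in> Bloch_inf \<mu>" "Bloch_norm \<mu> (S_op g f) \<le> C * Bloch_norm \<nu> f"
    using T[OF P(1)] by auto
  have bdd: "bdd_above ((\<lambda>z. \<mu> z * cmod (deriv (S_op g f) z)) ` unit_disc)"
    using S(1) by (auto simp: Bloch_inf_def)
  have "\<mu> z * cmod (g z) * cmod (h z) = \<mu> z * cmod (deriv (S_op g f) z)"
    using S_op_props(3)[OF assms(3) P(3) z] P(4)[OF z] by (simp add: norm_mult mult_ac)
  also have "\<dots> \<le> (SUP z\<in>unit_disc. \<mu> z * cmod (deriv (S_op g f) z))" by (rule cSUP_upper[OF z bdd])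
  also have "\<dots> = Bloch_norm \<mu> (S_op g f)"
    unfolding Bloch_norm_def using S_op_props(2)[OF assms(3) P(3)] by simp
  also have "\<dots> \<le> C * Bloch_norm \<nu> f" by (rule S(2))
  also have "\<dots> \<le> \<bar>C\<bar>"
  proof -
    have "0 \<le> Bloch_norm \<nu> f" "Bloch_norm \<nu> f \<le> 1" using Bloch_norm_nonneg[OF assms(1) P(1)] P(2) by auto
    note n = this
    then have "C * Bloch_norm \<nu> f \<le> \<bar>C\<bar> * Bloch_norm \<nu> f" by (intro mult_right_mono) auto
    also have "\<dots> \<le> \<bar>C\<bar> * 1" using n by (intro mult_left_mono) auto
    finally show ?thesis by simp
  qed
  finally show ?thesis .
qed

lemma lemB:
  assumes "weight \<nu>" "weight \<mu>" "g holomorphic_on unit_disc"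
  shows "bounded_op (S_op g) (Bloch_inf \<nu>) (Bloch_norm \<nu>) (Bloch_inf \<mu>) (Bloch_norm \<mu>) \<longleftrightarrow> (\<exists>M. KI g \<nu> \<mu> M)"
proof
  assume "bounded_op (S_op g) (Bloch_inf \<nu>) (Bloch_norm \<nu>) (Bloch_inf \<mu>) (Bloch_norm \<mu>)"
  then obtain C where T: "\<And>f. f \<in> Bloch_inf \<nu> \<Longrightarrow> S_op g f \<in> Bloch_inf \<mu> \<and> Bloch_norm \<mu> (S_op g f) \<le> C * Bloch_norm \<nu> f"
    unfolding bounded_op_def by blast
  have "KI g \<nu> \<mu> \<bar>C\<bar>" unfolding KI_def
  proof (intro allI impI ballI)
    fix h z assume h: "h holomorphic_on unit_disc" "\<forall>w\<in>unit_disc. \<nu> w * cmod (h w) \<le> 1" and z: "z \<in> unit_disc"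
    show "\<mu> z * cmod (g z) * cmod (h z) \<le> \<bar>C\<bar>"
      by (rule bound_imp_KI[OF assms h(1) _ z, of C]) (use h(2) T in auto)
  qed
  then show "\<exists>M. KI g \<nu> \<mu> M" by blast
next
  assume "\<exists>M. KI g \<nu> \<mu> M"
  then obtain M where "KI g \<nu> \<mu> M" by blast
  then show "bounded_op (S_op g) (Bloch_inf \<nu>) (Bloch_norm \<nu>) (Bloch_inf \<mu>) (Bloch_norm \<mu>)"
    unfolding bounded_op_def using KI_imp_bound[OF assms] by metis
qed


lemma Bloch0_sub:
  assumes "weight \<nu>" "f \<in> Bloch_0 \<nu>"
  shows "f \<in> Bloch_inf \<nu>"
proof -
  have fh: "f holomorphic_on unit_disc"
    and e: "\<forall>e>0. \<exists>r<1. \<forall>z\<in>unit_disc. r < cmod z \<longrightarrow> \<nu> z * cmod (deriv f z) < e"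
    using assms(2) by (auto simp: Bloch_0_def)
  obtain r where r: "r < 1" "\<forall>z\<in>unit_disc. r < cmod z \<longrightarrow> \<nu> z * cmod (deriv f z) < 1"
    using e by (meson zero_less_one)
  define r1 where "r1 = max r 0"
  have r1: "r1 < 1" "r \<le> r1" using r(1) by (auto simp: r1_def)
  have sub: "cball 0 r1 \<subseteq> unit_disc" using r1 by auto
  have c1: "continuous_on unit_disc \<nu>" using assms(1) by (simp add: weight_def)
  have c2: "continuous_on unit_disc (deriv f)"
    by (intro holomorphic_on_imp_continuous_on holomorphic_deriv fh) simp
  have c: "continuous_on unit_disc (\<lambda>z. \<nu> z * cmod (deriv f z))"
    by (intro continuous_on_mult c1 continuous_on_norm c2)
  have "compact ((\<lambda>z. \<nu> z * cmod (deriv f z)) ` cball 0 r1)"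
    by (rule compact_continuous_image[OF continuous_on_subset[OF c sub]]) simp
  then obtain K where K: "K > 0" "\<And>x. x \<in> (\<lambda>z. \<nu> z * cmod (deriv f z)) ` cball 0 r1 \<Longrightarrow> norm x \<le> K"
    using compact_imp_bounded bounded_pos by metis
  have "\<nu> z * cmod (deriv f z) \<le> max K 1" if z: "z \<in> unit_disc" for z
  proof (cases "cmod z \<le> r1")
    case True
    then have "norm (\<nu> z * cmod (deriv f z)) \<le> K" using K(2)[of "\<nu> z * cmod (deriv f z)"] by auto
    then show ?thesis by simp
  next
    case False
    then have "r < cmod z" using r1 by simp
    then show ?thesis using r(2) z by force
  qed
  then show ?thesis unfolding Bloch_inf_def using fh by (auto intro!: bdd_aboveI2[of _ _ "max K 1"])
qed

lemma lemD:
  assumes "typical_weight \<nu>" "weight \<mu>" "KI g \<nu> \<mu> M" "e > 0"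
  shows "\<exists>r<1. \<forall>z\<in>unit_disc. r < cmod z \<longrightarrow> \<mu> z * cmod (g z) < e"
proof -
  have wn: "weight \<nu>" using assms(1) by (simp add: typical_weight_def)
  have M0: "0 \<le> M" by (rule KI_nonneg[OF assms(3)])
  define B where "B = e / (2 * (M + 1))"
  have Bp: "B > 0" using assms(4) M0 by (simp add: B_def)
  obtain \<rho> where \<rho>: "\<rho> < 1" "\<forall>z\<in>unit_disc. \<rho> < cmod z \<longrightarrow> \<bar>\<nu> z\<bar> < B"
    using assms(1) Bp unfolding typical_weight_def by blast
  define \<rho>0 where "\<rho>0 = max \<rho> 0"
  have \<rho>0: "0 \<le> \<rho>0" "\<rho>0 < 1" "\<rho> \<le> \<rho>0" using \<rho>(1) by (auto simp: \<rho>0_def)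
  have n00: "0 \<le> \<nu> 0" using weight_nonneg[OF wn, of 0] by simp
  obtain n0 where n0: "\<rho>0 ^ n0 < B / (\<nu> 0 + 1)"
    using real_arch_pow_inv[of "B / (\<nu> 0 + 1)" \<rho>0] Bp n00 \<rho>0 by auto
  define n where "n = Suc n0"
  have "\<rho>0 ^ n \<le> \<rho>0 ^ n0" unfolding n_def using \<rho>0 by (intro power_decreasing) auto
  with n0 have pn: "\<rho>0 ^ n \<le> B / (\<nu> 0 + 1)" by simp
  have bnd: "\<nu> w * cmod (w ^ n) \<le> B" if w: "w \<in> unit_disc" for w
  proof (cases "cmod w \<le> \<rho>0")
    case True
    have "\<nu> w * cmod (w ^ n) \<le> \<nu> 0 * \<rho>0 ^ n"
      unfolding norm_power
      by (intro mult_mono power_mono weight_le0[OF wn w] True) (use weight_nonneg[OF wn w] n00 in auto)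
    also have "\<dots> \<le> \<nu> 0 * (B / (\<nu> 0 + 1))" by (intro mult_left_mono pn n00)
    also have "\<dots> \<le> B" using n00 Bp by (simp add: field_simps)
    finally show ?thesis .
  next
    case False
    then have "\<rho> < cmod w" using \<rho>0 by simp
    then have "\<bar>\<nu> w\<bar> < B" using \<rho>(2) w by blast
    moreover have "cmod (w ^ n) \<le> 1" using w unfolding norm_power by (simp add: power_le_one)
    moreover have "0 \<le> \<nu> w" using weight_nonneg[OF wn w] .
    ultimately have "\<nu> w * cmod (w ^ n) \<le> \<nu> w * 1" by (intro mult_left_mono) auto
    then show ?thesis using \<open>\<bar>\<nu> w\<bar> < B\<close> by simp
  qed
  have hol: "(\<lambda>w. w ^ n) holomorphic_on unit_disc" by (intro holomorphic_intros)
  have ki: "\<mu> z * cmod (g z) * cmod (z ^ n) \<le> M * B" if "z \<in> unit_disc" for z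
    by (rule KI_B[OF wn assms(2,3) hol bnd that])
  define r where "r = 1 - 1 / (2 * real n)"
  have npos: "real n \<ge> 1" unfolding n_def by simp
  have r1: "r < 1" using npos by (simp add: r_def)
  show ?thesis
  proof (intro exI[of _ r] conjI r1 ballI impI)
    fix z assume z: "z \<in> unit_disc" and rz: "r < cmod z"
    have r0: "0 \<le> r" using npos by (simp add: r_def field_simps)
    have "1 + real n * (- 1 / (2 * real n)) \<le> (1 + (- 1 / (2 * real n))) ^ n"
      by (rule Bernoulli_inequality) (use npos in \<open>simp add: field_simps\<close>)
    then have "1/2 \<le> r ^ n" using npos by (simp add: r_def field_simps)
    also have "\<dots> \<le> cmod z ^ n" using rz r0 by (intro power_mono) auto
    finally have half: "1/2 \<le> cmod (z ^ n)" by (simp add: norm_power)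
    have a0: "0 \<le> \<mu> z * cmod (g z)" using weight_nonneg[OF assms(2) z] by simp
    have "\<mu> z * cmod (g z) * (1/2) \<le> \<mu> z * cmod (g z) * cmod (z ^ n)"
      by (intro mult_left_mono half a0)
    also have "\<dots> \<le> M * B" by (rule ki[OF z])
    finally have "\<mu> z * cmod (g z) \<le> 2 * M * B" by simp
    also have "2 * M * B = e * (M / (M + 1))" using M0 by (simp add: B_def field_simps)
    also have "\<dots> < e" using M0 assms(4) by (simp add: field_simps)
    finally show "\<mu> z * cmod (g z) < e" .
  qed
qed


lemma hol_scale:
  assumes "h holomorphic_on unit_disc" "0 \<le> t" "t \<le> 1"
  shows "(\<lambda>w. h (of_real t * w)) holomorphic_on unit_disc"
proof -
  have img: "(\<lambda>w. of_real t * w) ` unit_disc \<subseteq> unit_disc"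
  proof
    fix x assume "x \<in> (\<lambda>w. of_real t * w) ` unit_disc"
    then obtain w where w: "w \<in> unit_disc" "x = of_real t * w" by blast
    have "cmod x = t * cmod w" using w(2) assms(2) by (simp add: norm_mult)
    also have "\<dots> \<le> cmod w" using assms(2,3) by (simp add: mult_left_le_one_le)
    finally show "x \<in> unit_disc" using w(1) by simp
  qed
  have "(h \<circ> (\<lambda>w. of_real t * w)) holomorphic_on unit_disc"
    by (rule holomorphic_on_compose_gen[OF _ assms(1) img]) (intro holomorphic_intros)
  then show ?thesis by (simp add: o_def)
qed

lemma lemE:
  assumes "typical_weight \<nu>" "weight \<mu>" "g holomorphic_on unit_disc" "KI g \<nu> \<mu> M" "f \<in> Bloch_0 \<nu>" "e > 0"
  shows "\<exists>r<1. \<forall>z\<in>unit_disc. r < cmod z \<longrightarrow> \<mu> z * cmod (deriv (S_op g f) z) < e"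
proof -
  have wn: "weight \<nu>" using assms(1) by (simp add: typical_weight_def)
  have M0: "0 \<le> M" by (rule KI_nonneg[OF assms(4)])
  have fh: "f holomorphic_on unit_disc"
    and fe: "\<forall>e>0. \<exists>r<1. \<forall>z\<in>unit_disc. r < cmod z \<longrightarrow> \<nu> z * cmod (deriv f z) < e"
    using assms(5) by (auto simp: Bloch_0_def)
  define h where "h = deriv f"
  have hh: "h holomorphic_on unit_disc" unfolding h_def by (rule holomorphic_deriv[OF fh]) simp
  define \<epsilon> where "\<epsilon> = e / (2 * M + 1)"
  have \<epsilon>p: "\<epsilon> > 0" using assms(6) M0 by (simp add: \<epsilon>_def)
  obtain \<rho> where \<rho>: "\<rho> < 1" "\<forall>w\<in>unit_disc. \<rho> < cmod w \<longrightarrow> \<nu> w * cmod (h w) < \<epsilon>"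
    using fe \<epsilon>p unfolding h_def by blast
  define \<rho>0 where "\<rho>0 = max \<rho> 0"
  have \<rho>0: "0 \<le> \<rho>0" "\<rho>0 < 1" "\<rho> \<le> \<rho>0" using \<rho>(1) by (auto simp: \<rho>0_def)
  have sub: "cball 0 \<rho>0 \<subseteq> unit_disc" using \<rho>0 by auto
  have n00: "0 \<le> \<nu> 0" using weight_nonneg[OF wn, of 0] by simp
  have "uniformly_continuous_on (cball 0 \<rho>0) h"
    by (rule compact_uniformly_continuous[OF holomorphic_on_imp_continuous_on[OF holomorphic_on_subset[OF hh sub]]]) simp
  moreover have "\<epsilon> / (\<nu> 0 + 1) > 0" using \<epsilon>p n00 by simp
  ultimately obtain d where d: "d > 0"
    "\<And>x x'. x \<in> cball 0 \<rho>0 \<Longrightarrow> x' \<in> cball 0 \<rho>0 \<Longrightarrow> dist x' x < d \<Longrightarrow> dist (h x') (h x) < \<epsilon> / (\<nu> 0 + 1)"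
    unfolding uniformly_continuous_on_def by metis
  define t where "t = max 0 (1 - d/2)"
  have t: "0 \<le> t" "t < 1" "1 - t < d" using d(1) by (auto simp: t_def)
  have key: "\<nu> w * cmod (h w - h (of_real t * w)) \<le> 2 * \<epsilon>" if w: "w \<in> unit_disc" for w
  proof (cases "cmod w \<le> \<rho>0")
    case True
    have nw: "0 \<le> \<nu> w" "\<nu> w \<le> \<nu> 0" using weight_nonneg[OF wn w] weight_le0[OF wn w] by auto
    have tw: "cmod (of_real t * w) \<le> cmod w" using t by (simp add: norm_mult mult_left_le_one_le)
    have "dist (of_real t * w) w = cmod ((of_real t - 1) * w)" by (simp add: dist_norm algebra_simps)
    also have "\<dots> = cmod (complex_of_real (t - 1) * w)" by simp
    also have "\<dots> = \<bar>t - 1\<bar> * cmod w" by (simp only: norm_mult norm_of_real)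
    also have "\<dots> = (1 - t) * cmod w" using t by simp
    also have "\<dots> \<le> (1 - t) * 1" using w t by (intro mult_left_mono) auto
    also have "\<dots> < d" using t by simp
    finally have "dist (h (of_real t * w)) (h w) < \<epsilon> / (\<nu> 0 + 1)"
      using d(2)[of w "of_real t * w"] True tw by simp
    then have hb: "cmod (h w - h (of_real t * w)) \<le> \<epsilon> / (\<nu> 0 + 1)" by (simp add: dist_norm norm_minus_commute)
    have "\<nu> w * cmod (h w - h (of_real t * w)) \<le> \<nu> 0 * (\<epsilon> / (\<nu> 0 + 1))"
      by (intro mult_mono hb nw) (use n00 in auto)
    also have "\<dots> \<le> \<epsilon>" using n00 \<epsilon>p by (simp add: field_simps)
    finally show ?thesis using \<epsilon>p by simp
  next
    case False
    then have \<rho>w: "\<rho> < cmod w" using \<rho>0 by simp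
    have a: "\<nu> w * cmod (h w) < \<epsilon>" using \<rho>(2) w \<rho>w by blast
    have nw: "0 \<le> \<nu> w" using weight_nonneg[OF wn w] .
    have b: "\<nu> w * cmod (h (of_real t * w)) \<le> \<epsilon>"
    proof (cases "\<nu> w = 0")
      case True then show ?thesis using \<epsilon>p by simp
    next
      case False
      then have nwp: "\<nu> w > 0" using nw by simp
      have "cmod (h (of_real t * w)) \<le> \<epsilon> / \<nu> w"
      proof (rule max_mod[OF hh w t(1)])
        show "t \<le> 1" using t by simp
        fix u assume u: "cmod u = cmod w"
        then have ud: "u \<in> unit_disc" using w by simp
        have "\<nu> u = \<nu> w" by (rule weight_eq[OF wn w ud u])
        moreover have "\<nu> u * cmod (h u) < \<epsilon>" using \<rho>(2) ud u \<rho>w by auto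
        ultimately show "cmod (h u) \<le> \<epsilon> / \<nu> w" using nwp by (simp add: field_simps)
      qed
      then show ?thesis using nwp by (simp add: field_simps)
    qed
    have "\<nu> w * cmod (h w - h (of_real t * w)) \<le> \<nu> w * (cmod (h w) + cmod (h (of_real t * w)))"
      by (intro mult_left_mono nw norm_triangle_ineq4)
    also have "\<dots> \<le> 2 * \<epsilon>" using a b by (simp add: algebra_simps)
    finally show ?thesis .
  qed
  have kh: "(\<lambda>w. h w - h (of_real t * w)) holomorphic_on unit_disc"
    using hh hol_scale[OF hh t(1)] t by (intro holomorphic_intros) auto
  have ki: "\<mu> z * cmod (g z) * cmod (h z - h (of_real t * z)) \<le> M * (2 * \<epsilon>)" if "z \<in> unit_disc" for z
    by (rule KI_B[OF wn assms(2,4) kh key that])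
  obtain K where K: "K \<ge> 0" "\<And>u. cmod u \<le> t \<Longrightarrow> cmod (h u) \<le> K"
    using cont_bound[OF hh t(2)] by blast
  have "\<epsilon> / (K + 1) > 0" using \<epsilon>p K(1) by simp
  then obtain r1 where r1: "r1 < 1" "\<forall>z\<in>unit_disc. r1 < cmod z \<longrightarrow> \<mu> z * cmod (g z) < \<epsilon> / (K + 1)"
    using lemD[OF assms(1,2,4)] by blast
  show ?thesis
  proof (intro exI[of _ r1] conjI r1(1) ballI impI)
    fix z assume z: "z \<in> unit_disc" and rz: "r1 < cmod z"
    have a0: "0 \<le> \<mu> z * cmod (g z)" using weight_nonneg[OF assms(2) z] by simp
    have ag: "\<mu> z * cmod (g z) < \<epsilon> / (K + 1)" using r1(2) z rz by blast
    have htz: "cmod (h (of_real t * z)) \<le> K"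
    proof (rule K(2))
      have "t * cmod z \<le> t * 1" using z t by (intro mult_left_mono) auto
      then show "cmod (of_real t * z) \<le> t" using t by (simp add: norm_mult)
    qed
    have "\<mu> z * cmod (deriv (S_op g f) z) = \<mu> z * cmod (g z) * cmod (h z)"
      using S_op_props(3)[OF assms(3) fh z] by (simp add: h_def norm_mult mult_ac)
    also have "\<dots> \<le> \<mu> z * cmod (g z) * (cmod (h z - h (of_real t * z)) + cmod (h (of_real t * z)))"
      by (intro mult_left_mono a0) (metis diff_add_cancel norm_triangle_ineq)
    also have "\<dots> = \<mu> z * cmod (g z) * cmod (h z - h (of_real t * z)) + \<mu> z * cmod (g z) * cmod (h (of_real t * z))"
      by (simp add: algebra_simps)
    also have "\<dots> \<le> M * (2 * \<epsilon>) + \<mu> z * cmod (g z) * (K + 1)"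
      by (intro add_mono ki[OF z] mult_left_mono a0) (use htz in simp)
    also have "\<dots> < M * (2 * \<epsilon>) + \<epsilon>"
      using ag K(1) by (simp add: field_simps)
    also have "\<dots> = (2 * M + 1) * \<epsilon>" by (simp add: algebra_simps)
    also have "\<dots> = e" using M0 unfolding \<epsilon>_def by simp
    finally show "\<mu> z * cmod (deriv (S_op g f) z) < e" .
  qed
qed


lemma scaled_in_Bloch0:
  assumes "typical_weight \<nu>" "h holomorphic_on unit_disc" "\<forall>w\<in>unit_disc. \<nu> w * cmod (h w) \<le> 1"
    and t: "0 \<le> t" "t < 1"
  defines "f \<equiv> (\<lambda>z. contour_integral (linepath 0 z) (\<lambda>w. h (of_real t * w)))"
  shows "f \<in> Bloch_0 \<nu>" "f \<in> Bloch_inf \<nu>" "Bloch_norm \<nu> f \<le> 1" "f holomorphic_on unit_disc"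
    "\<And>z. z \<in> unit_disc \<Longrightarrow> deriv f z = h (of_real t * z)"
proof -
  have wn: "weight \<nu>" using assms(1) by (simp add: typical_weight_def)
  have ht: "(\<lambda>w. h (of_real t * w)) holomorphic_on unit_disc" using hol_scale[OF assms(2) t(1)] t by simp
  have bt: "\<forall>w\<in>unit_disc. \<nu> w * cmod (h (of_real t * w)) \<le> 1"
  proof
    fix w assume w: "w \<in> unit_disc"
    have nw: "0 \<le> \<nu> w" using weight_nonneg[OF wn w] .
    show "\<nu> w * cmod (h (of_real t * w)) \<le> 1"
    proof (cases "\<nu> w = 0")
      case True then show ?thesis by simp
    next
      case False
      then have nwp: "\<nu> w > 0" using nw by simp
      have "cmod (h (of_real t * w)) \<le> 1 / \<nu> w"
      proof (rule max_mod[OF assms(2) w t(1)])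
        show "t \<le> 1" using t by simp
        fix u assume u: "cmod u = cmod w"
        then have ud: "u \<in> unit_disc" using w by simp
        have "\<nu> u = \<nu> w" by (rule weight_eq[OF wn w ud u])
        moreover have "\<nu> u * cmod (h u) \<le> 1" using assms(3) ud by blast
        ultimately show "cmod (h u) \<le> 1 / \<nu> w" using nwp by (simp add: field_simps)
      qed
      then show ?thesis using nwp by (simp add: field_simps)
    qed
  qed
  note P = prim_Bloch[OF wn ht bt, folded f_def]
  show "f \<in> Bloch_inf \<nu>" "Bloch_norm \<nu> f \<le> 1" "f holomorphic_on unit_disc"
    "\<And>z. z \<in> unit_disc \<Longrightarrow> deriv f z = h (of_real t * z)" using P by auto
  obtain K where K: "K \<ge> 0" "\<And>u. cmod u \<le> t \<Longrightarrow> cmod (h u) \<le> K"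
    using cont_bound[OF assms(2) t(2)] by blast
  have "\<exists>r<1. \<forall>z\<in>unit_disc. r < cmod z \<longrightarrow> \<nu> z * cmod (deriv f z) < e" if e: "e > 0" for e
  proof -
    have "e / (K + 1) > 0" using e K(1) by simp
    then obtain r where r: "r < 1" "\<forall>z\<in>unit_disc. r < cmod z \<longrightarrow> \<bar>\<nu> z\<bar> < e / (K + 1)"
      using assms(1) unfolding typical_weight_def by blast
    show ?thesis
    proof (intro exI[of _ r] conjI r(1) ballI impI)
      fix z assume z: "z \<in> unit_disc" and rz: "r < cmod z"
      have nz: "0 \<le> \<nu> z" using weight_nonneg[OF wn z] .
      have hz: "cmod (h (of_real t * z)) \<le> K"
      proof (rule K(2))
        have "t * cmod z \<le> t * 1" using z t by (intro mult_left_mono) auto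
        then show "cmod (of_real t * z) \<le> t" using t by (simp add: norm_mult)
      qed
      have "\<nu> z * cmod (deriv f z) = \<nu> z * cmod (h (of_real t * z))" using P(4)[OF z] by simp
      also have "\<dots> \<le> \<nu> z * (K + 1)" using hz nz by (intro mult_left_mono) auto
      also have "\<dots> < e / (K + 1) * (K + 1)"
        using r(2) z rz nz K(1) by (intro mult_strict_right_mono) auto
      also have "\<dots> = e" using K(1) by simp
      finally show "\<nu> z * cmod (deriv f z) < e" .
    qed
  qed
  then show "f \<in> Bloch_0 \<nu>" unfolding Bloch_0_def using P(3) by blast
qed

lemma bound_f:
  assumes "weight \<nu>" "weight \<mu>" "g holomorphic_on unit_disc"
    and f: "f holomorphic_on unit_disc" "f \<in> Bloch_inf \<nu>" "Bloch_norm \<nu> f \<le> 1"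
    and S: "S_op g f \<in> Bloch_inf \<mu>" "Bloch_norm \<mu> (S_op g f) \<le> C * Bloch_norm \<nu> f"
    and z: "z \<in> unit_disc"
  shows "\<mu> z * cmod (g z) * cmod (deriv f z) \<le> \<bar>C\<bar>"
proof -
  have bdd: "bdd_above ((\<lambda>z. \<mu> z * cmod (deriv (S_op g f) z)) ` unit_disc)"
    using S(1) by (auto simp: Bloch_inf_def)
  have "\<mu> z * cmod (g z) * cmod (deriv f z) = \<mu> z * cmod (deriv (S_op g f) z)"
    using S_op_props(3)[OF assms(3) f(1) z] by (simp add: norm_mult mult_ac)
  also have "\<dots> \<le> (SUP z\<in>unit_disc. \<mu> z * cmod (deriv (S_op g f) z))" by (rule cSUP_upper[OF z bdd])
  also have "\<dots> = Bloch_norm \<mu> (S_op g f)"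
    unfolding Bloch_norm_def using S_op_props(2)[OF assms(3) f(1)] by simp
  also have "\<dots> \<le> C * Bloch_norm \<nu> f" by (rule S(2))
  also have "\<dots> \<le> \<bar>C\<bar>"
  proof -
    have n: "0 \<le> Bloch_norm \<nu> f" "Bloch_norm \<nu> f \<le> 1" using Bloch_norm_nonneg[OF assms(1) f(2)] f(3) by auto
    then have "C * Bloch_norm \<nu> f \<le> \<bar>C\<bar> * Bloch_norm \<nu> f" by (intro mult_right_mono) auto
    also have "\<dots> \<le> \<bar>C\<bar> * 1" using n by (intro mult_left_mono) auto
    finally show ?thesis by simp
  qed
  finally show ?thesis .
qed

lemma lemC:
  assumes "typical_weight \<nu>" "typical_weight \<mu>" "g holomorphic_on unit_disc"
  shows "bounded_op (S_op g) (Bloch_0 \<nu>) (Bloch_norm \<nu>) (Bloch_0 \<mu>) (Bloch_norm \<mu>) \<longleftrightarrow> (\<exists>M. KI g \<nu> \<mu> M)"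
proof -
  have wn: "weight \<nu>" and wm: "weight \<mu>" using assms(1,2) by (auto simp: typical_weight_def)
  show ?thesis
  proof
    assume "bounded_op (S_op g) (Bloch_0 \<nu>) (Bloch_norm \<nu>) (Bloch_0 \<mu>) (Bloch_norm \<mu>)"
    then obtain C where T1: "\<And>f. f \<in> Bloch_0 \<nu> \<Longrightarrow> S_op g f \<in> Bloch_0 \<mu>"
      and T2: "\<And>f. f \<in> Bloch_0 \<nu> \<Longrightarrow> Bloch_norm \<mu> (S_op g f) \<le> C * Bloch_norm \<nu> f"
      unfolding bounded_op_def by blast
    have "KI g \<nu> \<mu> \<bar>C\<bar>" unfolding KI_def
    proof (intro allI impI ballI)
      fix h z assume h: "h holomorphic_on unit_disc" "\<forall>w\<in>unit_disc. \<nu> w * cmod (h w) \<le> 1" and z: "z \<in> unit_disc"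
      define \<phi> where "\<phi> = (\<lambda>t::real. \<mu> z * cmod (g z) * cmod (h (of_real t * z)))"
      have ev: "\<phi> t \<le> \<bar>C\<bar>" if t: "0 \<le> t" "t < 1" for t
      proof -
        define f where "f = (\<lambda>z. contour_integral (linepath 0 z) (\<lambda>w. h (of_real t * w)))"
        note F = scaled_in_Bloch0[OF assms(1) h t, folded f_def]
        have "\<mu> z * cmod (g z) * cmod (deriv f z) \<le> \<bar>C\<bar>"
          by (rule bound_f[OF wn wm assms(3) F(4) F(2) F(3) Bloch0_sub[OF wm T1[OF F(1)]] T2[OF F(1)] z])
        then show ?thesis using F(5)[OF z] by (simp add: \<phi>_def)
      qed
      have ch: "isCont h z"
        using holomorphic_on_imp_continuous_on[OF h(1)] z
        by (simp add: continuous_on_eq_continuous_at)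
      have "((\<lambda>t::real. of_real t * z) \<longlongrightarrow> of_real 1 * z) (at_left 1)"
        by (intro tendsto_intros)
      then have "((\<lambda>t::real. of_real t * z) \<longlongrightarrow> z) (at_left 1)" by simp
      then have "((\<lambda>t. h (of_real t * z)) \<longlongrightarrow> h z) (at_left (1::real))"
        by (rule isCont_tendsto_compose[OF ch])
      then have lim: "(\<phi> \<longlongrightarrow> \<mu> z * cmod (g z) * cmod (h z)) (at_left 1)"
        unfolding \<phi>_def by (intro tendsto_intros)
      have "eventually (\<lambda>t. \<phi> t \<le> \<bar>C\<bar>) (at_left (1::real))"
        by (rule eventually_mono[OF eventually_at_left_real[of 0 "1::real", OF zero_less_one]]) (auto intro: ev)
      then show "\<mu> z * cmod (g z) * cmod (h z) \<le> \<bar>C\<bar>"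
        by (rule tendsto_upperbound[OF lim]) (simp add: trivial_limit_at_left_real)
    qed
    then show "\<exists>M. KI g \<nu> \<mu> M" by blast
  next
    assume "\<exists>M. KI g \<nu> \<mu> M"
    then obtain M where M: "KI g \<nu> \<mu> M" by blast
    have "S_op g f \<in> Bloch_0 \<mu> \<and> Bloch_norm \<mu> (S_op g f) \<le> M * Bloch_norm \<nu> f" if f: "f \<in> Bloch_0 \<nu>" for f
    proof
      have fh: "f holomorphic_on unit_disc" using f by (simp add: Bloch_0_def)
      show "S_op g f \<in> Bloch_0 \<mu>" unfolding Bloch_0_def
        using S_op_props(1)[OF assms(3) fh] lemE[OF assms(1) wm assms(3) M f] by blast
      show "Bloch_norm \<mu> (S_op g f) \<le> M * Bloch_norm \<nu> f"
        using KI_imp_bound[OF wn wm assms(3) M Bloch0_sub[OF wn f]] by blast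
    qed
    then show "bounded_op (S_op g) (Bloch_0 \<nu>) (Bloch_norm \<nu>) (Bloch_0 \<mu>) (Bloch_norm \<mu>)"
      unfolding bounded_op_def by blast
  qed
qed

theorem theorem4:
  fixes g :: "complex \<Rightarrow> complex" and \<nu> \<mu> :: "complex \<Rightarrow> real"
  assumes "g holomorphic_on unit_disc" and "weight \<nu>" and "weight \<mu>"
  shows "(bounded_op (S_op g) (Bloch_inf \<nu>) (Bloch_norm \<nu>) (Bloch_inf \<mu>) (Bloch_norm \<mu>)
            \<longleftrightarrow> (SUP z\<in>unit_disc. ereal (cmod (g z) * \<mu> z) / assoc_weight \<nu> z) < \<infinity>)
       \<and> (typical_weight \<nu> \<and> typical_weight \<mu> \<longrightarrow>
            (bounded_op (S_op g) (Bloch_0 \<nu>) (Bloch_norm \<nu>) (Bloch_0 \<mu>) (Bloch_norm \<mu>)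
              \<longleftrightarrow> (SUP z\<in>unit_disc. ereal (cmod (g z) * \<mu> z) / assoc_weight \<nu> z) < \<infinity>))"
  using lemA[OF assms(2,3), of g] lemB[OF assms(2,3,1)] lemC[OF _ _ assms(1)] by blast

end
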